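(* Let $n \ge 1$ and $m \ge 2$ be integers, and let $D_n^m$ be the graph obtained from two disjoint copies $K_{n,1}$, $K_{n,2}$ of the complete graph $K_n$ and a path $P_m$ on $m$ vertices by identifying one endpoint of $P_m$ with a vertex of $K_{n,1}$ and the other endpoint of $P_m$ with a vertex of $K_{n,2}$ (so $D_n^m$ has $2n+m-2$ vertices). Then $$\frac{2}{(2n+m-3)(m+1)} \le \lambda_2(D_n^m) \le \frac{12}{6(m-1)(n-1)+m(m-1)}.$$
   Context: All graphs are finite, simple and unweighted. For a graph $G$ with adjacency matrix $A$ and diagonal degree matrix $D$, the graph Laplacian is $L_G = D - A$, whose quadratic form is $x^T L_G x = \sum_{(a,b)\in E}(x(a)-x(b))^2$; its eigenvalues are ordered $0=\lambda_1 \le \lambda_2 \le \dots$, and $\lambda_2(G)$ denotes the second smallest eigenvalue of $L_G$. $P_m$ denotes the path graph with $m$ vertices. *)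

theory Defs
  imports "Jordan_Normal_Form.Char_Poly" "HOL-Computational_Algebra.Polynomial"
begin

text \<open>Simple graphs on vertex set {0..<N} given by a symmetric irreflexive
adjacency predicate.\<close>

definition degree_G :: "nat \<Rightarrow> (nat \<Rightarrow> nat \<Rightarrow> bool) \<Rightarrow> nat \<Rightarrow> nat" where
  "degree_G N adj i = card {j. j < N \<and> adj i j}"

definition laplacian :: "nat \<Rightarrow> (nat \<Rightarrow> nat \<Rightarrow> bool) \<Rightarrow> real mat" where
  "laplacian N adj = mat N N (\<lambda>(i,j). if i = j then real (degree_G N adj i)
                                     else if adj i j then -1 else 0)"

text \<open>Eigenvalues of a real matrix with algebraic multiplicity (real roots of the
characteristic polynomial), sorted increasingly; lambda_2 is the second one.
For a symmetric matrix all eigenvalues are real.\<close>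
definition lambda2 :: "real mat \<Rightarrow> real" where
  "lambda2 L = sorted_list_of_multiset (proots (char_poly L)) ! 1"

text \<open>The graph D_n^m on vertices {0..<2n+m-2}: first K_n on {0..<n};
the path P_m on vertices n-1, n, ..., n+m-2; second K_n on {n+m-2..<2n+m-2}.\<close>
definition Dnm_size :: "nat \<Rightarrow> nat \<Rightarrow> nat" where
  "Dnm_size n m = 2*n + m - 2"

definition Dnm_adj :: "nat \<Rightarrow> nat \<Rightarrow> nat \<Rightarrow> nat \<Rightarrow> bool" where
  "Dnm_adj n m i j \<longleftrightarrow> i < Dnm_size n m \<and> j < Dnm_size n m \<and> i \<noteq> j \<and>
     ((i < n \<and> j < n) \<or>
      (n + m - 2 \<le> i \<and> n + m - 2 \<le> j) \<or>
      (n - 1 \<le> i \<and> i \<le> n + m - 2 \<and> n - 1 \<le> j \<and> j \<le> n + m - 2 \<and>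
       (i = j + 1 \<or> j = i + 1)))"

end

theory Submission
  imports Defs "HOL-Analysis.Function_Topology"
begin



definition Lf :: "nat \<Rightarrow> (nat \<Rightarrow> nat \<Rightarrow> bool) \<Rightarrow> (nat \<Rightarrow> real) \<Rightarrow> nat \<Rightarrow> real" where
  "Lf N adj x i = (\<Sum>j<N. if adj i j then x i - x j else 0)"

definition Qf :: "nat \<Rightarrow> (nat \<Rightarrow> nat \<Rightarrow> bool) \<Rightarrow> (nat \<Rightarrow> real) \<Rightarrow> real" where
  "Qf N adj x = (\<Sum>i<N. x i * Lf N adj x i)"

definition Eq :: "nat \<Rightarrow> (nat \<Rightarrow> nat \<Rightarrow> bool) \<Rightarrow> (nat \<Rightarrow> real) \<Rightarrow> real" where
  "Eq N adj x = (\<Sum>i<N. \<Sum>j<N. if adj i j then (x i - x j)^2 else 0) / 2"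

lemma Lf_sum:
  assumes sym: "\<And>i j. adj i j = adj j i"
  shows "(\<Sum>i<N. Lf N adj x i) = 0"
proof -
  have "(\<Sum>i<N. Lf N adj x i) = (\<Sum>i<N. \<Sum>j<N. (if adj i j then x i else 0)) - (\<Sum>i<N. \<Sum>j<N. (if adj i j then x j else 0))"
    unfolding Lf_def by (simp add: sum_subtractf[symmetric] if_distrib cong: if_cong)
  also have "(\<Sum>i<N. \<Sum>j<N. (if adj i j then x j else 0)) = (\<Sum>j<N. \<Sum>i<N. (if adj i j then x j else 0))"
    by (rule sum.swap)
  also have "\<dots> = (\<Sum>i<N. \<Sum>j<N. (if adj i j then x i else 0))"
    using sym by (simp cong: if_cong)
  finally show ?thesis by simp
qed

lemma bil_sym:
  assumes sym: "\<And>i j. adj i j = adj j i"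
  shows "(\<Sum>i<N. y i * Lf N adj x i) = (\<Sum>i<N. \<Sum>j<N. if adj i j then (x i - x j) * (y i - y j) else 0) / 2"
proof -
  define A where "A = (\<Sum>i<N. \<Sum>j<N. if adj i j then y i * (x i - x j) else 0)"
  have A1: "(\<Sum>i<N. y i * Lf N adj x i) = A"
    unfolding A_def Lf_def by (simp add: sum_distrib_left if_distrib cong: if_cong)
  have "A = (\<Sum>j<N. \<Sum>i<N. if adj i j then y i * (x i - x j) else 0)"
    unfolding A_def by (rule sum.swap)
  also have "\<dots> = (\<Sum>i<N. \<Sum>j<N. if adj i j then - y j * (x i - x j) else 0)"
    using sym by (simp add: algebra_simps cong: if_cong)
  finally have A2: "A = \<dots>" .
  have "2 * A = A + A" by simp
  also have "\<dots> = (\<Sum>i<N. \<Sum>j<N. if adj i j then (x i - x j) * (y i - y j) else 0)"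
    apply (subst A2) back
    unfolding A_def sum.distrib[symmetric] by (intro sum.cong refl) (auto simp: algebra_simps)
  finally show ?thesis using A1 by simp
qed

lemma Qf_Eq:
  assumes sym: "\<And>i j. adj i j = adj j i"
  shows "Qf N adj x = Eq N adj x"
  unfolding Qf_def Eq_def bil_sym[OF sym] power2_eq_square ..

lemma Eq_nonneg: "Eq N adj x \<ge> 0"
  unfolding Eq_def by (auto intro!: sum_nonneg divide_nonneg_nonneg)




lemma tree_le:
  assumes sym: "\<And>i j. adj i j = adj j i"
    and T: "T \<subseteq> {(i,j). i < j \<and> j < N \<and> adj i j}"
  shows "(\<Sum>p\<in>T. (x (fst p) - x (snd p))^2) \<le> Eq N adj x"
proof -
  define g where "g p = (if adj (fst p) (snd p) then (x (fst p) - x (snd p))^2 else 0)" for p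
  define U where "U = {..<N} \<times> {..<N}"
  have finU: "finite U" unfolding U_def by auto
  have Eq: "Eq N adj x = (\<Sum>p\<in>U. g p) / 2"
    unfolding Eq_def U_def g_def sum.cartesian_product by (simp add: case_prod_beta)
  have TU: "T \<subseteq> U" using T unfolding U_def by auto
  have finT: "finite T" using finite_subset[OF TU finU] .
  have T'U: "prod.swap ` T \<subseteq> U" using T unfolding U_def by auto
  have disj: "T \<inter> prod.swap ` T = {}"
  proof (rule ccontr)
    assume "T \<inter> prod.swap ` T \<noteq> {}"
    then obtain i j where "(i,j) \<in> T" "(j,i) \<in> T" by auto
    then have "(i,j) \<in> {(i, j). i < j \<and> j < N \<and> adj i j}" "(j,i) \<in> {(i, j). i < j \<and> j < N \<and> adj i j}"
      using T by (meson subsetD)+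
    then show False by simp
  qed
  have gT: "(\<Sum>p\<in>T. g p) = (\<Sum>p\<in>T. (x (fst p) - x (snd p))^2)"
    using T unfolding g_def by (intro sum.cong) auto
  have gT': "(\<Sum>p\<in>prod.swap ` T. g p) = (\<Sum>p\<in>T. g p)"
    by (subst sum.reindex) (auto simp: g_def sym power2_commute intro!: sum.cong)
  have "(\<Sum>p\<in>T \<union> prod.swap ` T. g p) \<le> (\<Sum>p\<in>U. g p)"
    using TU T'U by (intro sum_mono2 finU) (auto simp: g_def)
  moreover have "(\<Sum>p\<in>T \<union> prod.swap ` T. g p) = 2 * (\<Sum>p\<in>T. g p)"
    using disj finT by (subst sum.union_disjoint) (auto simp: gT')
  ultimately show ?thesis using Eq gT by simp
qed

lemma sum_sq_le_card: "finite R \<Longrightarrow> (\<Sum>k\<in>R. d k)^2 \<le> real (card R) * (\<Sum>k\<in>R. (d k)^2)"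
proof (induction R rule: finite_induct)
  case empty then show ?case by simp
next
  case (insert a R)
  define s where "s = (\<Sum>k\<in>R. d k)"
  define q where "q = (\<Sum>k\<in>R. (d k)^2)"
  have IH: "s^2 \<le> real (card R) * q" using insert unfolding s_def q_def by simp
  have "(\<Sum>k\<in>R. (d k - d a)^2) \<ge> 0" by (intro sum_nonneg) auto
  also have "(\<Sum>k\<in>R. (d k - d a)^2) = q - 2 * d a * s + real (card R) * (d a)^2"
    unfolding q_def s_def by (simp add: power2_diff sum.distrib sum_subtractf sum_distrib_left sum_distrib_right[symmetric] algebra_simps)
  finally have h: "0 \<le> q - 2 * d a * s + real (card R) * (d a)^2" .
  have "(d a + s)^2 \<le> (real (card R) + 1) * ((d a)^2 + q)"
    using IH h by (simp add: power2_sum algebra_simps)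
  then show ?case using insert unfolding s_def q_def by (simp add: algebra_simps)
qed




context fixes n m :: nat assumes n1: "1 \<le> n" and m2: "2 \<le> m"
begin

lemma adj_sym: "Dnm_adj n m i j = Dnm_adj n m j i"
  unfolding Dnm_adj_def by auto

lemma adj_irr: "\<not> Dnm_adj n m i i"
  unfolding Dnm_adj_def by auto

lemma size_eq: "Dnm_size n m = 2*n+m-2" unfolding Dnm_size_def by simp

lemma tree_bound:
  "(\<Sum>i<n-1. (x i - x (n-1))^2) + (\<Sum>k\<in>{n-1..<n+m-2}. (x k - x (Suc k))^2)
     + (\<Sum>j\<in>{Suc (n+m-2)..<2*n+m-2}. (x (n+m-2) - x j)^2) \<le> Eq (Dnm_size n m) (Dnm_adj n m) x"
proof -
  define T1 where "T1 = (\<lambda>i. (i, n-1)) ` {..<n-1}"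
  define T2 where "T2 = (\<lambda>k. (k, Suc k)) ` {n-1..<n+m-2}"
  define T3 where "T3 = (\<lambda>j. (n+m-2, j)) ` {Suc (n+m-2)..<2*n+m-2}"
  define f where "f p = (x (fst p) - x (snd p))^2" for p
  have s1: "(\<Sum>p\<in>T1. f p) = (\<Sum>i<n-1. (x i - x (n-1))^2)"
    unfolding T1_def f_def by (subst sum.reindex) (auto simp: inj_on_def)
  have s2: "(\<Sum>p\<in>T2. f p) = (\<Sum>k\<in>{n-1..<n+m-2}. (x k - x (Suc k))^2)"
    unfolding T2_def f_def by (subst sum.reindex) (auto simp: inj_on_def)
  have s3: "(\<Sum>p\<in>T3. f p) = (\<Sum>j\<in>{Suc (n+m-2)..<2*n+m-2}. (x (n+m-2) - x j)^2)"
    unfolding T3_def f_def by (subst sum.reindex) (auto simp: inj_on_def)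
  have d12: "T1 \<inter> T2 = {}" unfolding T1_def T2_def by auto
  have d3: "(T1 \<union> T2) \<inter> T3 = {}" unfolding T1_def T2_def T3_def using n1 m2 by auto
  have fin: "finite T1" "finite T2" "finite T3" unfolding T1_def T2_def T3_def by auto
  have "(\<Sum>p\<in>T1 \<union> T2 \<union> T3. f p) = (\<Sum>p\<in>T1. f p) + (\<Sum>p\<in>T2. f p) + (\<Sum>p\<in>T3. f p)"
    using fin d12 d3 by (simp add: sum.union_disjoint)
  moreover have "(\<Sum>p\<in>T1 \<union> T2 \<union> T3. f p) \<le> Eq (Dnm_size n m) (Dnm_adj n m) x"
    unfolding f_def
  proof (rule tree_le)
    show "Dnm_adj n m i j = Dnm_adj n m j i" for i j by (rule adj_sym)
    show "T1 \<union> T2 \<union> T3 \<subseteq> {(i, j). i < j \<and> j < Dnm_size n m \<and> Dnm_adj n m i j}"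
      unfolding T1_def T2_def T3_def using n1 m2 by (auto simp: Dnm_adj_def Dnm_size_def)
  qed
  ultimately show ?thesis using s1 s2 s3 by simp
qed

lemma path_bound:
  assumes "n-1 \<le> p" "p \<le> q" "q \<le> n+m-2"
  shows "(x p - x q)^2 \<le> real (m-1) * (\<Sum>k\<in>{n-1..<n+m-2}. (x k - x (Suc k))^2)"
proof -
  have "x q - x p = (\<Sum>k\<in>{p..<q}. x (Suc k) - x k)"
    using assms by (simp add: sum_Suc_diff')
  then have "(x p - x q)^2 = (\<Sum>k\<in>{p..<q}. x (Suc k) - x k)^2"
    by (metis power2_commute)
  also have "\<dots> \<le> real (card {p..<q}) * (\<Sum>k\<in>{p..<q}. (x (Suc k) - x k)^2)"
    by (rule sum_sq_le_card) simp
  also have "\<dots> \<le> real (m-1) * (\<Sum>k\<in>{n-1..<n+m-2}. (x k - x (Suc k))^2)"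
  proof (rule mult_mono)
    show "real (card {p..<q}) \<le> real (m - 1)" using assms by simp
    show "(\<Sum>k\<in>{p..<q}. (x (Suc k) - x k)^2) \<le> (\<Sum>k\<in>{n-1..<n+m-2}. (x k - x (Suc k))^2)"
    proof -
      have eq: "(\<Sum>k\<in>{p..<q}. (x (Suc k) - x k)^2) = (\<Sum>k\<in>{p..<q}. (x k - x (Suc k))^2)"
        by (intro sum.cong refl) (rule power2_commute)
      show ?thesis unfolding eq using assms by (intro sum_mono2) auto
    qed
  qed (auto intro: sum_nonneg)
  finally show ?thesis .
qed

lemma cs3:
  fixes u v w k :: real
  assumes "k > 0"
  shows "(u+v+w)^2 \<le> (k+2) * (u^2 + v^2/k + w^2)"
proof -
  have "k * (u+v+w)^2 \<le> (k+2) * (k*u^2 + v^2 + k*w^2)"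
  proof -
    have "(k+2) * (k*u^2 + v^2 + k*w^2) - k * (u+v+w)^2 = (k*u - v)^2 + (k*w - v)^2 + k*(u-w)^2"
      by (simp add: power2_eq_square algebra_simps)
    also have "\<dots> \<ge> 0" using assms by (intro add_nonneg_nonneg) auto
    finally show ?thesis by simp
  qed
  moreover have "k * ((k+2) * (u^2 + v^2/k + w^2)) = (k+2) * (k*u^2 + v^2 + k*w^2)"
    using assms by (simp add: field_simps)
  ultimately have "k * (u+v+w)^2 \<le> k * ((k+2) * (u^2 + v^2/k + w^2))"
    by linarith
  then show ?thesis using assms by (simp add: mult_le_cancel_left_pos)
qed

lemma pair_bound:
  assumes iN: "i < Dnm_size n m" and jN: "j < Dnm_size n m"
  shows "(x i - x j)^2 \<le> real (m+1) * Eq (Dnm_size n m) (Dnm_adj n m) x"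
proof (cases "i = j")
  case True
  then show ?thesis using Eq_nonneg[of "Dnm_size n m" "Dnm_adj n m" x] by simp
next
  case False
  define a where "a = n - 1"
  define b where "b = n + m - 2"
  define N where "N = 2*n+m-2"
  have NN: "Dnm_size n m = N" unfolding N_def Dnm_size_def by simp
  have ab: "a \<le> b" "b < N" "Suc b \<le> N" unfolding a_def b_def N_def using n1 m2 by auto
  define p where "p k = (if k < a then a else if b < k then b else k)" for k
  define r where "r k = (if k < a then (x k - x a)^2 else if b < k then (x b - x k)^2 else 0)" for k
  define A where "A = (\<Sum>k<a. (x k - x a)^2)"
  define S where "S = (\<Sum>k\<in>{a..<b}. (x k - x (Suc k))^2)"
  define B where "B = (\<Sum>k\<in>{Suc b..<N}. (x b - x k)^2)"
  have tree: "A + S + B \<le> Eq N (Dnm_adj n m) x"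
    using tree_bound[of x] unfolding A_def S_def B_def a_def b_def N_def NN[unfolded N_def] .
  have rnn: "r k \<ge> 0" for k unfolding r_def by auto
  have sumr: "(\<Sum>k<N. r k) = A + B"
  proof -
    have c1: "(\<Sum>k\<in>{0..<a}. r k) + (\<Sum>k\<in>{a..<Suc b}. r k) = (\<Sum>k\<in>{0..<Suc b}. r k)"
      using ab by (intro sum.atLeastLessThan_concat) auto
    have c2: "(\<Sum>k\<in>{0..<Suc b}. r k) + (\<Sum>k\<in>{Suc b..<N}. r k) = (\<Sum>k\<in>{0..<N}. r k)"
      using ab by (intro sum.atLeastLessThan_concat) auto
    have "(\<Sum>k<N. r k) = (\<Sum>k\<in>{0..<a}. r k) + (\<Sum>k\<in>{a..<Suc b}. r k) + (\<Sum>k\<in>{Suc b..<N}. r k)"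
      using c1 c2 unfolding lessThan_atLeast0 by linarith
    also have "(\<Sum>k\<in>{0..<a}. r k) = A" unfolding A_def r_def lessThan_atLeast0 by (intro sum.cong) auto
    also have "(\<Sum>k\<in>{a..<Suc b}. r k) = 0" unfolding r_def by (intro sum.neutral) auto
    also have "(\<Sum>k\<in>{Suc b..<N}. r k) = B" unfolding B_def r_def using ab by (intro sum.cong) auto
    finally show ?thesis by simp
  qed
  have hr: "r i + r j \<le> A + B"
  proof -
    have "r i + r j = (\<Sum>k\<in>{i,j}. r k)" using False by simp
    also have "\<dots> \<le> (\<Sum>k<N. r k)" using iN jN NN rnn by (intro sum_mono2) auto
    finally show ?thesis using sumr by simp
  qed
  define u where "u = x i - x (p i)"
  define v where "v = x (p i) - x (p j)"
  define w where "w = x (p j) - x j"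
  have u2: "u^2 = r i" unfolding u_def r_def p_def by (auto simp: power2_commute)
  have w2: "w^2 = r j" unfolding w_def r_def p_def by (auto simp: power2_commute)
  have pr: "a \<le> p k" "p k \<le> b" for k unfolding p_def using ab by auto
  have v2: "v^2 \<le> real (m-1) * S"
  proof (cases "p i \<le> p j")
    case True
    then show ?thesis unfolding v_def S_def a_def b_def
      using path_bound[of "p i" "p j" x] pr unfolding a_def b_def by auto
  next
    case False
    then have "v^2 = (x (p j) - x (p i))^2" unfolding v_def by (simp add: power2_commute)
    then show ?thesis unfolding S_def a_def b_def
      using path_bound[of "p j" "p i" x] pr False unfolding a_def b_def by auto
  qed
  define k where "k = real (m-1)"
  have k0: "k > 0" unfolding k_def using m2 by simp
  have "x i - x j = u + v + w" unfolding u_def v_def w_def by simp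
  then have "(x i - x j)^2 \<le> (k+2) * (u^2 + v^2/k + w^2)" using cs3[OF k0] by simp
  also have "\<dots> \<le> (k+2) * (r i + S + r j)"
  proof -
    have "v^2/k \<le> S" using v2 k0 unfolding k_def by (simp add: divide_le_eq mult.commute)
    then show ?thesis using k0 u2 w2 by (intro mult_left_mono) auto
  qed
  also have "\<dots> \<le> (k+2) * (A + S + B)" using hr k0 by (intro mult_left_mono) auto
  also have "\<dots> \<le> (k+2) * Eq N (Dnm_adj n m) x" using tree k0 by (intro mult_left_mono) auto
  also have "k + 2 = real (m+1)" unfolding k_def using m2 by simp
  finally show ?thesis unfolding NN .
qed

lemma poincare:
  assumes s0: "(\<Sum>i<Dnm_size n m. x i) = 0"
  shows "(\<Sum>i<Dnm_size n m. (x i)^2) \<le> real (2*n+m-3) * real (m+1) / 2 * Eq (Dnm_size n m) (Dnm_adj n m) x"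
proof -
  define N where "N = Dnm_size n m"
  define E where "E = Eq N (Dnm_adj n m) x"
  have N0: "N > 0" "N - 1 = 2*n+m-3" unfolding N_def Dnm_size_def using n1 m2 by auto
  have "(\<Sum>i<N. \<Sum>j<N. (x i - x j)^2) = (\<Sum>i<N. \<Sum>j<N. (x i)^2 + (x j)^2 - 2 * x i * x j)"
    by (simp add: power2_diff algebra_simps)
  also have "\<dots> = 2 * real N * (\<Sum>i<N. (x i)^2) - 2 * (\<Sum>i<N. x i) * (\<Sum>j<N. x j)"
    by (simp add: sum.distrib sum_subtractf sum_distrib_left sum_distrib_right algebra_simps)
  finally have lhs: "(\<Sum>i<N. \<Sum>j<N. (x i - x j)^2) = 2 * real N * (\<Sum>i<N. (x i)^2)"
    using s0 unfolding N_def by simp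
  have "(\<Sum>i<N. \<Sum>j<N. (x i - x j)^2) \<le> (\<Sum>i<N. \<Sum>j<N. if i = j then 0 else real (m+1) * E)"
    using pair_bound unfolding N_def E_def by (intro sum_mono) auto
  also have "\<dots> = (\<Sum>i<N. real (N - 1) * (real (m+1) * E))"
  proof (intro sum.cong refl)
    fix i assume "i \<in> {..<N}"
    then have "(\<Sum>j<N. if i = j then 0 else real (m+1) * E) = (\<Sum>j\<in>{..<N} - {i}. real (m+1) * E)"
      by (simp add: sum.If_cases Diff_eq Int_commute)
    also have "\<dots> = real (N - 1) * (real (m+1) * E)" using \<open>i \<in> {..<N}\<close> by (simp add: of_nat_diff)
    finally show "(\<Sum>j<N. if i = j then 0 else real (m+1) * E) = real (N - 1) * (real (m+1) * E)" .
  qed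
  also have "\<dots> = real N * (real (N-1) * (real (m+1) * E))" using N0(1) by (simp add: of_nat_diff)
  finally have h: "2 * real N * (\<Sum>i<N. (x i)^2) \<le> real N * (real (N-1) * (real (m+1) * E))" using lhs by simp
  define G where "G = (\<Sum>i<N. (x i)^2)"
  define K where "K = real (N-1) * (real (m+1) * E)"
  have "real N * (2 * G) \<le> real N * K" using h unfolding G_def K_def by (simp add: mult.assoc mult.left_commute)
  then have "2 * G \<le> K" using N0(1) by (simp add: mult_le_cancel_left_pos)
  then have "(\<Sum>i<N. (x i)^2) \<le> real (N-1) * real (m+1) / 2 * E" unfolding G_def K_def by simp
  then show ?thesis unfolding N_def E_def using N0(2) unfolding N_def by simp
qed

end



lemma lap_carrier: "laplacian N adj \<in> carrier_mat N N"
  unfolding laplacian_def by simp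

lemma Lf_deg:
  "Lf N adj x i = real (degree_G N adj i) * x i - (\<Sum>j<N. if adj i j then x j else 0)"
proof -
  have "Lf N adj x i = (\<Sum>j<N. if adj i j then x i else 0) - (\<Sum>j<N. if adj i j then x j else 0)"
    unfolding Lf_def by (simp add: sum_subtractf[symmetric] if_distrib cong: if_cong)
  also have "(\<Sum>j<N. if adj i j then x i else 0) = real (card {j. j < N \<and> adj i j}) * x i"
  proof -
    have "(\<Sum>j<N. if adj i j then x i else 0) = (\<Sum>j\<in>{j. j < N \<and> adj i j}. x i)"
      by (simp add: sum.If_cases Int_def)
    then show ?thesis by simp
  qed
  finally show ?thesis unfolding degree_G_def .
qed

lemma lap_mult:
  assumes v: "v \<in> carrier_vec N" and i: "i < N" and irr: "\<not> adj i i"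
  shows "(laplacian N adj *\<^sub>v v) $ i = Lf N adj (\<lambda>k. v $ k) i"
proof -
  have "(laplacian N adj *\<^sub>v v) $ i = (\<Sum>j<N. (if i = j then real (degree_G N adj i) else if adj i j then -1 else 0) * v $ j)"
    using v i unfolding laplacian_def by (simp add: scalar_prod_def lessThan_atLeast0)
  also have "\<dots> = (\<Sum>j<N. (if i = j then real (degree_G N adj i) * v $ j else 0) + (if adj i j then - (v $ j) else 0))"
    using irr by (intro sum.cong refl) auto
  also have "\<dots> = real (degree_G N adj i) * v $ i - (\<Sum>j<N. if adj i j then v $ j else 0)"
    using i by (simp add: sum.distrib if_distrib[of uminus] sum_negf[symmetric] cong: if_cong)
  finally show ?thesis unfolding Lf_deg .
qed

lemma eig_props:
  assumes sym: "\<And>i j. adj i j = adj j i" and irr: "\<And>i. \<not> adj i i"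
    and v: "v \<in> carrier_vec N" and ev: "laplacian N adj *\<^sub>v v = \<mu> \<cdot>\<^sub>v v"
  shows "\<mu> * (\<Sum>i<N. (v $ i)^2) = Eq N adj (\<lambda>k. v $ k)"
    and "\<mu> \<noteq> 0 \<Longrightarrow> (\<Sum>i<N. v $ i) = 0"
proof -
  have L: "Lf N adj (\<lambda>k. v $ k) i = \<mu> * v $ i" if "i < N" for i
  proof -
    have "Lf N adj (\<lambda>k. v $ k) i = (laplacian N adj *\<^sub>v v) $ i"
      using lap_mult[of v N i adj, OF v that irr[of i]] by simp
    also have "\<dots> = \<mu> * v $ i" using ev v that by simp
    finally show ?thesis .
  qed
  have "Eq N adj (\<lambda>k. v $ k) = Qf N adj (\<lambda>k. v $ k)" using Qf_Eq[OF sym] by simp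
  also have "\<dots> = (\<Sum>i<N. v $ i * (\<mu> * v $ i))" unfolding Qf_def using L by simp
  also have "\<dots> = \<mu> * (\<Sum>i<N. (v $ i)^2)" by (simp add: sum_distrib_left power2_eq_square algebra_simps)
  finally show "\<mu> * (\<Sum>i<N. (v $ i)^2) = Eq N adj (\<lambda>k. v $ k)" by simp
  assume "\<mu> \<noteq> 0"
  have "0 = (\<Sum>i<N. Lf N adj (\<lambda>k. v $ k) i)" using Lf_sum[OF sym] by simp
  also have "\<dots> = \<mu> * (\<Sum>i<N. v $ i)" using L by (simp add: sum_distrib_left)
  finally show "(\<Sum>i<N. v $ i) = 0" using \<open>\<mu> \<noteq> 0\<close> by simp
qed




lemma Lf_const: "Lf N adj (\<lambda>k. c) i = 0"
  unfolding Lf_def by (intro sum.neutral) simp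

lemma order_zero_simple:
  assumes sym: "\<And>i j. adj i j = adj j i" and irr: "\<And>i. \<not> adj i i"
    and N: "N > 0"
    and conn: "\<And>x i j. Eq N adj x = 0 \<Longrightarrow> i < N \<Longrightarrow> j < N \<Longrightarrow> x i = x j"
  shows "order 0 (char_poly (laplacian N adj)) = 1"
proof -
  define L where "L = laplacian N adj"
  have L: "L \<in> carrier_mat N N" unfolding L_def by (rule lap_carrier)
  define S :: "real mat" where "S = mat N N (\<lambda>(i,j). if j = 0 \<or> i = j then 1 else 0)"
  have S: "S \<in> carrier_mat N N" unfolding S_def by simp
  have detS: "det S = 1"
  proof -
    have "det S = prod_list (diag_mat S)"
      by (rule det_lower_triangular[OF _ S]) (auto simp: S_def)
    also have "diag_mat S = map (\<lambda>i. 1) [0..<N]" unfolding S_def diag_mat_def by simp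
    finally show ?thesis by (simp add: map_replicate_const)
  qed
  from det_non_zero_imp_unit[OF S, of "()"] detS
  have "S \<in> Units (ring_mat TYPE(real) N ())" by simp
  from this[unfolded Units_def ring_mat_def]
  obtain Si where Si: "Si \<in> carrier_mat N N" and SiS: "Si * S = 1\<^sub>m N" and SSi: "S * Si = 1\<^sub>m N" by auto
  define T where "T = Si * L * S"
  have T: "T \<in> carrier_mat N N" unfolding T_def using Si L S by auto
  have LS: "L * S = S * T"
  proof -
    have "S * T = (S * Si) * (L * S)" unfolding T_def using S Si L by (simp add: assoc_mult_mat[of _ N N _ N _ N])
    also have "\<dots> = L * S" using SSi L S by simp
    finally show ?thesis by simp
  qed
  have LT: "L = S * T * Si"
  proof -
    have "S * T * Si = L * S * Si" using LS by simp
    also have "\<dots> = L * (S * Si)" using L S Si by simp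
    also have "\<dots> = L" using SSi L by simp
    finally show ?thesis by simp
  qed
  have "similar_mat_wit L T S Si"
    unfolding similar_mat_wit_def Let_def using L T S Si SSi SiS LT by simp
  then have sim: "similar_mat L T" unfolding similar_mat_def by blast
  have cp: "char_poly L = char_poly T" by (rule char_poly_similar[OF sim])
  have ones: "L *\<^sub>v vec N (\<lambda>_. 1) = 0\<^sub>v N"
  proof (rule eq_vecI)
    fix i assume "i < dim_vec (0\<^sub>v N :: real vec)"
    then have i: "i < N" by simp
    have "(L *\<^sub>v vec N (\<lambda>_. 1)) $ i = Lf N adj (\<lambda>k. vec N (\<lambda>_. 1) $ k) i"
      unfolding L_def by (rule lap_mult[OF _ i irr]) simp
    also have "\<dots> = 0" unfolding Lf_def using i by (intro sum.neutral) auto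
    finally show "(L *\<^sub>v vec N (\<lambda>_. 1)) $ i = (0\<^sub>v N) $ i" using i by simp
  qed (use L in simp)
  have Tcol: "T $$ (i, 0) = 0" if i: "i < N" for i
  proof -
    have T2: "T = Si * (L * S)" unfolding T_def using Si L S by (simp add: assoc_mult_mat[of _ N N _ N _ N])
    have LSc: "L * S \<in> carrier_mat N N" using L S by simp
    have "col T 0 = Si *\<^sub>v col (L * S) 0"
      unfolding T2 by (rule col_mult2[OF Si LSc N])
    also have "col (L * S) 0 = L *\<^sub>v col S 0" by (rule col_mult2[OF L S N])
    also have "col S 0 = vec N (\<lambda>_. 1)" unfolding S_def using N by (intro eq_vecI) auto
    also have "Si *\<^sub>v (L *\<^sub>v vec N (\<lambda>_. 1)) = 0\<^sub>v N" unfolding ones using Si by (intro eq_vecI) auto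
    finally have "col T 0 = 0\<^sub>v N" .
    then have "col T 0 $ i = 0" using i by simp
    then show ?thesis using T i N by simp
  qed
  define CPM where "CPM = char_poly_matrix T"
  have CPM: "CPM \<in> carrier_mat N N" unfolding CPM_def using T by simp
  define D where "D = mat_delete T 0 0"
  have D: "D \<in> carrier_mat (N-1) (N-1)" unfolding D_def by (rule mat_delete_carrier[OF T])
  have CPM0: "CPM $$ (i, 0) = (if i = 0 then [:0,1:] else 0)" if "i < N" for i
    using that T N Tcol[OF that] unfolding CPM_def char_poly_matrix_def by auto
  have del: "mat_delete CPM 0 0 = char_poly_matrix D"
    using T unfolding CPM_def D_def char_poly_matrix_def mat_delete_def by (intro eq_matI) auto
  have "char_poly T = det CPM" unfolding CPM_def char_poly_def ..
  also have "\<dots> = (\<Sum>i<N. CPM $$ (i,0) * cofactor CPM i 0)"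
    by (rule laplace_expansion_column[OF CPM N])
  also have "\<dots> = (\<Sum>i<N. if i = 0 then [:0,1:] * cofactor CPM 0 0 else 0)"
    using CPM0 by (intro sum.cong refl) auto
  also have "\<dots> = [:0,1:] * cofactor CPM 0 0" using N by simp
  also have "cofactor CPM 0 0 = char_poly D" unfolding cofactor_def del char_poly_def by simp
  finally have cpT: "char_poly T = [:0,1:] * char_poly D" .
  have Sv: "(S *\<^sub>v y) $ i = y $ 0 + (if i = 0 then 0 else y $ i)" if y: "y \<in> carrier_vec N" and i: "i < N" for y i
  proof -
    obtain N' where N': "N = Suc N'" using N by (cases N) auto
    have "(S *\<^sub>v y) $ i = (\<Sum>k<N. (if k = 0 \<or> i = k then 1 else 0) * y $ k)"
      using y i unfolding S_def by (simp add: scalar_prod_def lessThan_atLeast0)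
    also have "\<dots> = y $ 0 + (\<Sum>k<N'. (if i = Suc k then y $ Suc k else 0))"
      unfolding N' sum.lessThan_Suc_shift by (simp, intro sum.cong refl, simp)
    also have "(\<Sum>k<N'. (if i = Suc k then y $ Suc k else 0)) = (if i = 0 then 0 else y $ i)"
    proof (cases i)
      case 0 then show ?thesis by simp
    next
      case (Suc i') then show ?thesis using i N' by (simp add: sum.delta)
    qed
    finally show ?thesis .
  qed
  have Dnz: "poly (char_poly D) 0 \<noteq> 0"
  proof
    assume "poly (char_poly D) 0 = 0"
    then have "eigenvalue D 0" using eigenvalue_root_char_poly[OF D] by simp
    then obtain w where w: "w \<in> carrier_vec (N-1)" and w0: "w \<noteq> 0\<^sub>v (N-1)" and Dw: "D *\<^sub>v w = 0 \<cdot>\<^sub>v w"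
      unfolding eigenvalue_def eigenvector_def using D by auto
    obtain N' where N': "N = Suc N'" using N by (cases N) auto
    define z where "z = vec N (\<lambda>i. if i = 0 then 0 else w $ (i - 1))"
    have z: "z \<in> carrier_vec N" unfolding z_def by simp
    have Tz: "(T *\<^sub>v z) $ i = 0" if "0 < i" "i < N" for i
    proof -
      have "(T *\<^sub>v z) $ i = (\<Sum>k<N. T $$ (i,k) * z $ k)"
        using T z that by (simp add: scalar_prod_def lessThan_atLeast0)
      also have "\<dots> = (\<Sum>k<N'. T $$ (i, Suc k) * w $ k)"
        unfolding N' sum.lessThan_Suc_shift z_def using N' by simp
      also have "\<dots> = (D *\<^sub>v w) $ (i - 1)"
        using that w N' T unfolding D_def mat_delete_def by (simp add: scalar_prod_def lessThan_atLeast0)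
      also have "\<dots> = 0" using Dw w that N' by simp
      finally show ?thesis .
    qed
    define t where "t = (T *\<^sub>v z) $ 0"
    have Tzc: "T *\<^sub>v z \<in> carrier_vec N" using T z by simp
    have Szz: "S *\<^sub>v z = z"
      using z Sv[OF z] S unfolding z_def by (intro eq_vecI) (auto simp: z_def)
    have Lz: "(L *\<^sub>v z) $ i = t" if i: "i < N" for i
    proof -
      have "L *\<^sub>v z = L *\<^sub>v (S *\<^sub>v z)" using Szz by simp
      also have "\<dots> = (L * S) *\<^sub>v z" using L S z by simp
      also have "\<dots> = (S * T) *\<^sub>v z" using LS by simp
      also have "\<dots> = S *\<^sub>v (T *\<^sub>v z)" using S T z by simp
      finally have "(L *\<^sub>v z) $ i = (S *\<^sub>v (T *\<^sub>v z)) $ i" by simp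
      also have "\<dots> = t" using Sv[OF Tzc i] Tz i unfolding t_def by auto
      finally show ?thesis .
    qed
    have Lfz: "Lf N adj (\<lambda>k. z $ k) i = t" if i: "i < N" for i
      using lap_mult[of z N i adj, OF z i irr[of i]] Lz[OF i] unfolding L_def by simp
    have "0 = (\<Sum>i<N. Lf N adj (\<lambda>k. z $ k) i)" using Lf_sum[OF sym] by simp
    also have "\<dots> = real N * t" using Lfz by simp
    finally have t0: "t = 0" using N by simp
    have "Eq N adj (\<lambda>k. z $ k) = Qf N adj (\<lambda>k. z $ k)" using Qf_Eq[OF sym] by simp
    also have "\<dots> = 0" unfolding Qf_def using Lfz t0 by simp
    finally have E0: "Eq N adj (\<lambda>k. z $ k) = 0" .
    have "w = 0\<^sub>v (N-1)"
    proof (rule eq_vecI)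
      fix k assume "k < dim_vec (0\<^sub>v (N - 1) :: real vec)"
      then have k: "k < N'" using N' by simp
      have "z $ Suc k = z $ 0" using conn[OF E0, of "Suc k" 0] k N' by simp
      then show "w $ k = 0\<^sub>v (N - 1) $ k" using k N' unfolding z_def by simp
    qed (use w in simp)
    with w0 show False by simp
  qed
  have qnz: "char_poly D \<noteq> 0" using Dnz by auto
  have "order 0 (char_poly L) = order 0 ([:0,1:] * char_poly D)" unfolding cp cpT ..
  also have "\<dots> = order 0 [:0,1::real:] + order 0 (char_poly D)"
    using qnz by (intro order_mult) simp
  also have "order 0 (char_poly D) = 0" using Dnz by (rule order_0I)
  also have "order 0 [:0,1::real:] = 1" using order_power_n_n[of "0::real" 1] by simp
  finally show ?thesis unfolding L_def by simp
qed



lemma quad_zero: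
  fixes a b :: real
  assumes h: "\<And>t. 0 \<le> 2*t*b + t^2*a"
  shows "b = 0"
proof -
  define c where "c = \<bar>a\<bar> + 1"
  have pos: "c > 0" unfolding c_def by simp
  define t where "t = - b / c"
  have "0 \<le> 2*t*b + t^2*a" by (rule h)
  then have "0 \<le> (2*t*b + t^2*a) * c^2" by simp
  also have "(2*t*b + t^2*a) * c^2 = b^2 * (a - 2*c)"
    unfolding t_def using pos by (simp add: field_simps power2_eq_square)
  finally have "0 \<le> b^2 * (a - 2*c)" .
  moreover have "a - 2*c < 0" unfolding c_def by (auto simp: abs_if)
  ultimately have "b^2 \<le> 0" by (simp add: mult_le_0_iff zero_le_mult_iff) 
  then show ?thesis by simp
qed

lemma cont_Eq: "continuous_on UNIV (Eq N adj)"
proof -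
  have eq: "Eq N adj = (\<lambda>x. (\<Sum>i<N. \<Sum>j<N. (if adj i j then 1 else 0) * (x i - x j)^2) / 2)"
    unfolding Eq_def by (intro ext arg_cong2[where f="(/)"] sum.cong refl) auto
  have c: "continuous_on UNIV (\<lambda>x::nat\<Rightarrow>real. x i)" for i by simp
  show ?thesis unfolding eq
    by (intro continuous_intros c) auto
qed

lemma cont_G: "continuous_on UNIV (\<lambda>x::nat\<Rightarrow>real. \<Sum>i<N. (x i)^2)"
  and cont_S: "continuous_on UNIV (\<lambda>x::nat\<Rightarrow>real. \<Sum>i<N. x i)"
proof -
  have c: "continuous_on UNIV (\<lambda>x::nat\<Rightarrow>real. x i)" for i by simp
  show "continuous_on UNIV (\<lambda>x::nat\<Rightarrow>real. \<Sum>i<N. (x i)^2)" by (intro continuous_intros c)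
  show "continuous_on UNIV (\<lambda>x::nat\<Rightarrow>real. \<Sum>i<N. x i)" by (intro continuous_intros c)
qed

lemma compact_K:
  "compact {x::nat\<Rightarrow>real. (\<forall>i. x i \<in> {-1..1}) \<and> (\<Sum>i<N. x i) = 0 \<and> (\<Sum>i<N. (x i)^2) = 1}"
proof -
  have "compactin (product_topology (\<lambda>i. euclidean) UNIV) (PiE UNIV (\<lambda>i::nat. {-1..1::real}))"
    by (subst compactin_PiE) auto
  then have c1: "compact (Pi UNIV (\<lambda>i::nat. {-1..1::real}))"
    unfolding euclidean_product_topology PiE_UNIV_domain by simp
  have c2: "closed {x::nat\<Rightarrow>real. (\<Sum>i<N. x i) = 0 \<and> (\<Sum>i<N. (x i)^2) = 1}"
    by (intro closed_Collect_conj closed_Collect_eq cont_G cont_S continuous_on_const)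
  have "{x::nat\<Rightarrow>real. (\<forall>i. x i \<in> {-1..1}) \<and> (\<Sum>i<N. x i) = 0 \<and> (\<Sum>i<N. (x i)^2) = 1}
     = Pi UNIV (\<lambda>i::nat. {-1..1::real}) \<inter> {x::nat\<Rightarrow>real. (\<Sum>i<N. x i) = 0 \<and> (\<Sum>i<N. (x i)^2) = 1}"
    by auto
  then show ?thesis using compact_Int_closed[OF c1 c2] by simp
qed

lemma Lf_lin: "Lf N adj (\<lambda>i. x i + t * y i) i = Lf N adj x i + t * Lf N adj y i"
proof -
  have "Lf N adj x i + t * Lf N adj y i = (\<Sum>j<N. (if adj i j then x i - x j else 0) + t * (if adj i j then y i - y j else 0))"
    unfolding Lf_def by (simp add: sum.distrib sum_distrib_left)
  also have "\<dots> = Lf N adj (\<lambda>i. x i + t * y i) i"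
    unfolding Lf_def by (intro sum.cong refl) (auto simp: algebra_simps)
  finally show ?thesis by simp
qed

lemma Eq_cong: "(\<And>i. i < N \<Longrightarrow> x i = y i) \<Longrightarrow> Eq N adj x = Eq N adj y"
  unfolding Eq_def by (intro arg_cong2[where f="(/)"] sum.cong refl) auto

lemma Eq_scale: "Eq N adj (\<lambda>i. c * x i) = c^2 * Eq N adj x"
proof -
  have "Eq N adj (\<lambda>i. c * x i) = (\<Sum>i<N. \<Sum>j<N. c^2 * (if adj i j then (x i - x j)^2 else 0)) / 2"
    unfolding Eq_def by (intro arg_cong2[where f="(/)"] sum.cong refl) (auto simp: power2_eq_square algebra_simps)
  also have "\<dots> = c^2 * Eq N adj x" unfolding Eq_def by (simp add: sum_distrib_left[symmetric])
  finally show ?thesis .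
qed

lemma min_eig:
  assumes sym: "\<And>i j. adj i j = adj j i" and irr: "\<And>i. \<not> adj i i"
    and ys: "(\<Sum>i<N. y i) = 0" and yG: "(\<Sum>i<N. (y i)^2) > 0"
  shows "\<exists>\<mu> x. poly (char_poly (laplacian N adj)) \<mu> = 0 \<and> \<mu> * (\<Sum>i<N. (y i)^2) \<le> Eq N adj y
     \<and> (\<Sum>i<N. x i) = 0 \<and> (\<Sum>i<N. (x i)^2) = 1 \<and> \<mu> = Eq N adj x"
proof -
  define G where "G x = (\<Sum>i<N. (x i)^2)" for x :: "nat \<Rightarrow> real"
  define K where "K = {x::nat\<Rightarrow>real. (\<forall>i. x i \<in> {-1..1}) \<and> (\<Sum>i<N. x i) = 0 \<and> (\<Sum>i<N. (x i)^2) = 1}"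
  have Gnn: "G x \<ge> 0" for x unfolding G_def by (intro sum_nonneg) auto
  have Gle: "(x i)^2 \<le> G x" if "i < N" for x i
    unfolding G_def using that by (intro member_le_sum) auto
  have normK: "(\<lambda>i. if i < N then z i / sqrt (G z) else 0) \<in> K"
    and normE: "Eq N adj (\<lambda>i. if i < N then z i / sqrt (G z) else 0) = Eq N adj z / G z"
    if zs: "(\<Sum>i<N. z i) = 0" and zG: "G z > 0" for z
  proof -
    define w where "w = (\<lambda>i. if i < N then z i / sqrt (G z) else 0)"
    have sq: "sqrt (G z) > 0" using zG by simp
    have Gw: "G w = 1"
    proof -
      have sq2: "(sqrt (G z))^2 = G z" using Gnn[of z] by simp
      have "G w = (\<Sum>i<N. (z i)^2 / G z)" unfolding G_def[of w] unfolding w_def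
        by (intro sum.cong refl) (simp add: power_divide sq2)
      also have "\<dots> = G z / G z" unfolding G_def[of z] by (rule sum_divide_distrib[symmetric])
      finally show ?thesis using zG by simp
    qed
    have sw: "(\<Sum>i<N. w i) = 0"
    proof -
      have "(\<Sum>i<N. w i) = (\<Sum>i<N. z i) / sqrt (G z)" unfolding w_def by (simp add: sum_divide_distrib)
      then show ?thesis using zs by simp
    qed
    have "w i \<in> {-1..1}" for i
    proof (cases "i < N")
      case True
      have "(w i)^2 \<le> 1" using Gle[OF True, of w] Gw by simp
      then have "\<bar>w i\<bar> \<le> 1" by (simp add: abs_square_le_1)
      then show ?thesis by auto
    next
      case False then show ?thesis unfolding w_def by simp
    qed
    then show "w \<in> K" unfolding K_def using Gw sw unfolding G_def by auto
    have "Eq N adj w = Eq N adj (\<lambda>i. (1 / sqrt (G z)) * z i)"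
      unfolding w_def by (rule Eq_cong) simp
    also have "\<dots> = Eq N adj z / G z" unfolding Eq_scale using Gnn[of z]
      by (simp add: power_divide)
    finally show "Eq N adj w = Eq N adj z / G z" .
  qed
  have Kne: "K \<noteq> {}" using normK[OF ys] yG unfolding G_def by auto
  have Kc: "compact K" unfolding K_def by (rule compact_K)
  obtain x0 where x0K: "x0 \<in> K" and x0min: "\<And>x. x \<in> K \<Longrightarrow> Eq N adj x0 \<le> Eq N adj x"
    using continuous_attains_inf[OF Kc Kne continuous_on_subset[OF cont_Eq subset_UNIV]] by blast
  define \<mu> where "\<mu> = Eq N adj x0"
  have x0s: "(\<Sum>i<N. x0 i) = 0" and x0G: "G x0 = 1" using x0K unfolding K_def G_def by auto
  have ray: "\<mu> * G z \<le> Eq N adj z" if zs: "(\<Sum>i<N. z i) = 0" for z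
  proof (cases "G z > 0")
    case True
    have "\<mu> \<le> Eq N adj z / G z" unfolding \<mu>_def using x0min[OF normK[OF zs True]] normE[OF zs True] by simp
    then show ?thesis using True by (simp add: le_divide_eq)
  next
    case False
    then have "G z = 0" using Gnn[of z] by linarith
    then show ?thesis using Eq_nonneg[of N adj z] by simp
  qed
  have QE: "Qf N adj x = Eq N adj x" for x using Qf_Eq[OF sym] .
  have bsym: "(\<Sum>i<N. x i * Lf N adj y i) = (\<Sum>i<N. y i * Lf N adj x i)" for x y
    unfolding bil_sym[OF sym, of x] bil_sym[OF sym, of y]
    by (intro arg_cong2[where f="(/)"] sum.cong refl) (auto simp: mult.commute)
  \<comment> \<open>first variation\<close>
  have var: "(\<Sum>i<N. y i * Lf N adj x0 i) = \<mu> * (\<Sum>i<N. x0 i * y i)" if yz: "(\<Sum>i<N. y i) = 0" for y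
  proof -
    define b where "b = (\<Sum>i<N. y i * Lf N adj x0 i) - \<mu> * (\<Sum>i<N. x0 i * y i)"
    define a where "a = Eq N adj y - \<mu> * G y"
    have "0 \<le> 2*t*b + t^2*a" for t
    proof -
      define z where "z = (\<lambda>i. x0 i + t * y i)"
      have zs: "(\<Sum>i<N. z i) = 0" unfolding z_def using x0s yz by (simp add: sum.distrib sum_distrib_left[symmetric])
      have Ez: "Eq N adj z = \<mu> + 2*t*(\<Sum>i<N. y i * Lf N adj x0 i) + t^2 * Eq N adj y"
      proof -
        have "Eq N adj z = Qf N adj z" using QE by simp
        also have "\<dots> = (\<Sum>i<N. x0 i * Lf N adj x0 i) + t * (\<Sum>i<N. x0 i * Lf N adj y i)
            + t * (\<Sum>i<N. y i * Lf N adj x0 i) + t^2 * (\<Sum>i<N. y i * Lf N adj y i)"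
          unfolding Qf_def z_def Lf_lin
          by (simp add: sum.distrib sum_distrib_left algebra_simps power2_eq_square)
        also have "\<dots> = \<mu> + 2*t*(\<Sum>i<N. y i * Lf N adj x0 i) + t^2 * Eq N adj y"
          unfolding bsym[of x0 y] \<mu>_def QE[symmetric] Qf_def by (simp add: algebra_simps)
        finally show ?thesis .
      qed
      have Gz: "G z = 1 + 2*t*(\<Sum>i<N. x0 i * y i) + t^2 * G y"
      proof -
        have "G z = G x0 + 2*t*(\<Sum>i<N. x0 i * y i) + t^2 * G y"
          unfolding G_def z_def by (simp add: power2_sum sum.distrib sum_distrib_left power_mult_distrib algebra_simps)
        then show ?thesis using x0G by simp
      qed
      have "\<mu> * G z \<le> Eq N adj z" by (rule ray[OF zs])
      then show ?thesis unfolding Ez Gz a_def b_def by (simp add: algebra_simps)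
    qed
    then have "b = 0" by (rule quad_zero)
    then show ?thesis unfolding b_def by simp
  qed
  define z where "z i = Lf N adj x0 i - \<mu> * x0 i" for i
  have zs: "(\<Sum>i<N. z i) = 0" unfolding z_def using Lf_sum[OF sym, where N=N and x=x0] x0s
    by (simp add: sum_subtractf sum_distrib_left[symmetric])
  have "(\<Sum>i<N. (z i)^2) = (\<Sum>i<N. z i * Lf N adj x0 i) - \<mu> * (\<Sum>i<N. x0 i * z i)"
    unfolding z_def by (simp add: power2_eq_square sum_subtractf sum_distrib_left sum.distrib algebra_simps)
  also have "\<dots> = 0" using var[OF zs] by simp
  finally have "(\<Sum>i<N. (z i)^2) = 0" .
  then have z0: "z i = 0" if "i < N" for i using that by (simp add: sum_nonneg_eq_0_iff)
  define v where "v = vec N x0"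
  have v: "v \<in> carrier_vec N" unfolding v_def by simp
  have ev: "laplacian N adj *\<^sub>v v = \<mu> \<cdot>\<^sub>v v"
  proof (rule eq_vecI)
    fix i assume "i < dim_vec (\<mu> \<cdot>\<^sub>v v)"
    then have i: "i < N" using v by simp
    have "(laplacian N adj *\<^sub>v v) $ i = Lf N adj (\<lambda>k. v $ k) i"
      by (rule lap_mult[OF v i irr])
    also have "Lf N adj (\<lambda>k. v $ k) i = Lf N adj x0 i"
      unfolding Lf_def v_def using i by (intro sum.cong refl) auto
    also have "\<dots> = \<mu> * x0 i" using z0[OF i] unfolding z_def by simp
    finally show "(laplacian N adj *\<^sub>v v) $ i = (\<mu> \<cdot>\<^sub>v v) $ i" using i unfolding v_def by simp
  qed (simp add: lap_carrier[THEN carrier_matD(1)] v_def)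
  have vnz: "v \<noteq> 0\<^sub>v N"
  proof
    assume "v = 0\<^sub>v N"
    then have "x0 i = 0" if "i < N" for i using that unfolding v_def by (metis index_vec index_zero_vec(1))
    then have "G x0 = 0" unfolding G_def by simp
    then show False using x0G by simp
  qed
  have "eigenvalue (laplacian N adj) \<mu>"
    unfolding eigenvalue_def eigenvector_def using v vnz ev lap_carrier[of N adj] by auto
  then have root: "poly (char_poly (laplacian N adj)) \<mu> = 0"
    using eigenvalue_root_char_poly[OF lap_carrier] by simp
  show ?thesis
    using root ray[OF ys] x0s x0G unfolding G_def \<mu>_def by blast
qed




lemma sum_lin: "(\<Sum>k<m. 2 * real k - c) = real m * (real m - 1) - real m * c"
  by (induction m) (auto simp: algebra_simps)

lemma sum_sq: "3 * (\<Sum>k<m. (2 * real k - c)^2) = 2 * (real m - 1) * real m * (2 * real m - 1) - 6 * c * real m * (real m - 1) + 3 * real m * c^2"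
  by (induction m) (auto simp: algebra_simps power2_eq_square)

lemma sum_split_add: fixes a b :: nat shows "(\<Sum>i<a+b. f i) = (\<Sum>i<a. f i) + (\<Sum>i<b. f (i + a))"
  by (induction b) (auto simp: add.commute add.left_commute)

context fixes n m :: nat assumes n1: "1 \<le> n" and m2: "2 \<le> m"
begin

definition xt :: "nat \<Rightarrow> real" where
  "xt i = (if i < n-1 then - real (m-1) else if i \<le> n+m-2 then 2 * real i - real (2*n+m-3) else real (m-1))"

lemma xt_split:
  "(\<Sum>i<Dnm_size n m. f i) = (\<Sum>i<n-1. f i) + (\<Sum>k<m. f (k + (n-1))) + (\<Sum>i<n-1. f (i + (n+m-1)))"
proof -
  have N: "Dnm_size n m = (n+m-1) + (n-1)" unfolding Dnm_size_def using n1 m2 by simp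
  have a: "(\<Sum>i<(n+m-1) + (n-1). f i) = (\<Sum>i<n+m-1. f i) + (\<Sum>i<n-1. f (i + (n+m-1)))"
    by (rule sum_split_add)
  have b: "(\<Sum>i<n+m-1. f i) = (\<Sum>i<n-1. f i) + (\<Sum>k<m. f (k + (n-1)))"
  proof -
    have "n+m-1 = (n-1) + m" using n1 by simp
    then show ?thesis by (simp add: sum_split_add)
  qed
  show ?thesis unfolding N a b ..
qed

lemma casts: "real (2*n+m-3) = 2 * real n + real m - 3" "real (m-1) = real m - 1" "real (n-1) = real n - 1"
  using n1 m2 by (auto simp: of_nat_diff)

lemma casts2: "real (n - Suc 0) = real n - 1" using n1 by (simp add: of_nat_diff)

lemma xt_A: "i < n-1 \<Longrightarrow> xt i = - (real m - 1)" unfolding xt_def casts by simp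
lemma xt_P: "k < m \<Longrightarrow> xt (k + (n-1)) = 2 * real k - (real m - 1)"
  unfolding xt_def casts using n1 m2 by (auto simp: of_nat_diff)
lemma xt_B: "xt (i + (n+m-1)) = real m - 1" unfolding xt_def casts using n1 m2 by auto

lemma xt_sum: "(\<Sum>i<Dnm_size n m. xt i) = 0"
proof -
  have "(\<Sum>i<n-1. xt i) = (\<Sum>i<n-1. - (real m - 1))" by (rule sum.cong) (auto simp: xt_A)
  then have sA: "(\<Sum>i<n-1. xt i) = - (real n - 1) * (real m - 1)" by (simp add: casts casts2 algebra_simps)
  have sP: "(\<Sum>k<m. xt (k + (n-1))) = 0"
  proof -
    have "(\<Sum>k<m. xt (k + (n-1))) = (\<Sum>k<m. 2 * real k - (real m - 1))" using xt_P by simp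
    also have "\<dots> = 0" unfolding sum_lin[where c="real m - 1"] by (simp add: algebra_simps)
    finally show ?thesis .
  qed
  have "(\<Sum>i<n-1. xt (i + (n+m-1))) = (\<Sum>i<n-1. real m - 1)" by (rule sum.cong[OF refl], rule xt_B)
  then have sB: "(\<Sum>i<n-1. xt (i + (n+m-1))) = (real n - 1) * (real m - 1)" by (simp add: casts casts2)
  show ?thesis unfolding xt_split sA sP sB by (simp add: algebra_simps)
qed

lemma xt_sq: "3 * (\<Sum>i<Dnm_size n m. (xt i)^2) = 6 * (real n - 1) * (real m - 1)^2 + real m * (real m - 1) * (real m + 1)"
proof -
  have "(\<Sum>i<n-1. (xt i)^2) = (\<Sum>i<n-1. (real m - 1)^2)" by (rule sum.cong) (auto simp: xt_A power2_eq_square algebra_simps)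
  then have sA: "(\<Sum>i<n-1. (xt i)^2) = (real n - 1) * (real m - 1)^2" by (simp add: casts casts2)
  have sP: "3 * (\<Sum>k<m. (xt (k + (n-1)))^2) = real m * (real m - 1) * (real m + 1)"
  proof -
    have "(\<Sum>k<m. (xt (k + (n-1)))^2) = (\<Sum>k<m. (2 * real k - (real m - 1))^2)" using xt_P by simp
    moreover have "3 * (\<Sum>k<m. (2 * real k - (real m - 1))^2) = real m * (real m - 1) * (real m + 1)"
      unfolding sum_sq by (simp add: algebra_simps power2_eq_square)
    ultimately show ?thesis by simp
  qed
  have "(\<Sum>i<n-1. (xt (i + (n+m-1)))^2) = (\<Sum>i<n-1. (real m - 1)^2)" by (rule sum.cong[OF refl], simp only: xt_B)
  then have sB: "(\<Sum>i<n-1. (xt (i + (n+m-1)))^2) = (real n - 1) * (real m - 1)^2" by (simp add: casts casts2)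
  have "3 * (\<Sum>i<Dnm_size n m. (xt i)^2) = 3 * (\<Sum>i<n-1. (xt i)^2) + 3 * (\<Sum>k<m. (xt (k + (n-1)))^2) + 3 * (\<Sum>i<n-1. (xt (i + (n+m-1)))^2)"
    unfolding xt_split by (simp add: algebra_simps)
  also have "\<dots> = 6 * (real n - 1) * (real m - 1)^2 + real m * (real m - 1) * (real m + 1)"
    unfolding sA sP sB by simp
  finally show ?thesis .
qed

lemma nm1: "k < n \<Longrightarrow> \<not> k < n - Suc 0 \<Longrightarrow> real k = real n - 1"
  by (simp add: of_nat_diff)

lemma xt_a: "i \<le> n-1 \<Longrightarrow> xt i = - (real m - 1)"
  unfolding xt_def casts using n1 m2 by (auto simp: of_nat_diff)
lemma xt_p: "n-1 \<le> i \<Longrightarrow> i \<le> n+m-2 \<Longrightarrow> xt i = 2 * real i - (2 * real n + real m - 3)"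
  unfolding xt_def casts using n1 m2 by auto
lemma xt_b: "n+m-2 \<le> i \<Longrightarrow> xt i = real m - 1"
  unfolding xt_def casts using n1 m2 by (auto simp: of_nat_diff)

lemma xt_edge:
  assumes i: "i < Dnm_size n m" and j: "j < Dnm_size n m"
  shows "(if Dnm_adj n m i j then (xt i - xt j)^2 else 0)
    = 4 * (if j = Suc i \<and> n-1 \<le> i \<and> i < n+m-2 then 1 else 0) + 4 * (if i = Suc j \<and> n-1 \<le> j \<and> j < n+m-2 then 1 else 0)"
proof -
  consider (I1) "j = Suc i \<and> n-1 \<le> i \<and> i < n+m-2" | (I2) "i = Suc j \<and> n-1 \<le> j \<and> j < n+m-2"
    | (N) "\<not> (j = Suc i \<and> n-1 \<le> i \<and> i < n+m-2)" "\<not> (i = Suc j \<and> n-1 \<le> j \<and> j < n+m-2)" by blast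
  then show ?thesis
  proof cases
    case I1
    have adj: "Dnm_adj n m i j" using I1 i j unfolding Dnm_adj_def by auto
    have "xt j - xt i = 2" using I1 xt_p[of i] xt_p[of j] by simp
    then have "xt i - xt j = -2" by simp
    then have "(xt i - xt j)^2 = 4" by simp
    then show ?thesis using adj I1 by simp
  next
    case I2
    have adj: "Dnm_adj n m i j" using I2 i j unfolding Dnm_adj_def by auto
    have "xt i - xt j = 2" using I2 xt_p[of i] xt_p[of j] by simp
    then have "(xt i - xt j)^2 = 4" by simp
    then show ?thesis using adj I2 by simp
  next
    case N
    have "xt i = xt j" if adj: "Dnm_adj n m i j"
    proof -
      have c: "(i < n \<and> j < n) \<or> (n + m - 2 \<le> i \<and> n + m - 2 \<le> j) \<or>
        (n - 1 \<le> i \<and> i \<le> n + m - 2 \<and> n - 1 \<le> j \<and> j \<le> n + m - 2 \<and> (i = j + 1 \<or> j = i + 1))"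
        using adj unfolding Dnm_adj_def by blast
      show ?thesis
      proof (cases "i < n \<and> j < n")
        case True
        then have "i \<le> n-1" "j \<le> n-1" by auto
        then show ?thesis using xt_a[of i] xt_a[of j] by presburger
      next
        case F1: False
        show ?thesis
        proof (cases "n + m - 2 \<le> i \<and> n + m - 2 \<le> j")
          case True
          then show ?thesis using xt_b[of i] xt_b[of j] by presburger
        next
          case False
          with F1 c have "n - 1 \<le> i \<and> i \<le> n + m - 2 \<and> n - 1 \<le> j \<and> j \<le> n + m - 2 \<and> (i = j + 1 \<or> j = i + 1)"
            by blast
          with N have False by auto
          then show ?thesis ..
        qed
      qed
    qed
    then show ?thesis using N by auto
  qed
qed

lemma xt_Eq: "Eq (Dnm_size n m) (Dnm_adj n m) xt = 4 * (real m - 1)"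
proof -
  define N where "N = Dnm_size n m"
  define P where "P i = (n-1 \<le> i \<and> i < n+m-2)" for i
  define I where "I i j = (if j = Suc i \<and> P i then 1 else 0 :: real)" for i j
  have "(\<Sum>i<N. \<Sum>j<N. if Dnm_adj n m i j then (xt i - xt j)^2 else 0) = (\<Sum>i<N. \<Sum>j<N. 4 * I i j + 4 * I j i)"
    unfolding N_def I_def P_def using xt_edge by (intro sum.cong refl) auto
  also have "\<dots> = 4 * (\<Sum>i<N. \<Sum>j<N. I i j) + 4 * (\<Sum>i<N. \<Sum>j<N. I j i)"
    by (simp add: sum.distrib sum_distrib_left)
  also have "(\<Sum>i<N. \<Sum>j<N. I j i) = (\<Sum>i<N. \<Sum>j<N. I i j)" by (rule sum.swap)
  also have "(\<Sum>i<N. \<Sum>j<N. I i j) = (\<Sum>i<N. if P i then 1 else 0)"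
  proof (intro sum.cong refl)
    fix i assume "i \<in> {..<N}"
    have "(\<Sum>j<N. I i j) = (\<Sum>j<N. if j = Suc i then (if P i then 1 else 0) else 0)"
      unfolding I_def by (intro sum.cong refl) auto
    also have "\<dots> = (if Suc i < N then (if P i then 1 else 0) else 0)" by (simp add: sum.delta')
    also have "\<dots> = (if P i then 1 else 0)" unfolding P_def N_def Dnm_size_def using n1 m2 by auto
    finally show "(\<Sum>j<N. I i j) = (if P i then 1 else 0)" .
  qed
  also have "(\<Sum>i<N. if P i then 1 else 0 :: real) = real (card {n-1..<n+m-2})"
  proof -
    have "{i \<in> {..<N}. P i} = {n-1..<n+m-2}" unfolding P_def N_def Dnm_size_def using n1 m2 by auto
    then show ?thesis by (simp add: sum.If_cases Int_def)
  qed
  also have "real (card {n-1..<n+m-2}) = real m - 1" using n1 m2 by (simp add: of_nat_diff)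
  finally show ?thesis unfolding Eq_def N_def by simp
qed

end


theorem theorem4p1:
  fixes n m :: nat
  assumes "n \<ge> 1" and "m \<ge> 2"
  shows "2 / (real (2*n + m - 3) * real (m + 1))
           \<le> lambda2 (laplacian (Dnm_size n m) (Dnm_adj n m)) \<and>
         lambda2 (laplacian (Dnm_size n m) (Dnm_adj n m))
           \<le> 12 / (6 * real (m - 1) * real (n - 1) + real m * real (m - 1))"
proof -
  note n1 = assms(1) and m2 = assms(2)
  define N where "N = Dnm_size n m"
  define adj where "adj = Dnm_adj n m"
  define L where "L = laplacian N adj"
  define p where "p = char_poly L"
  define K where "K = real (2*n + m - 3) * real (m + 1)"
  have Kpos: "K > 0" unfolding K_def using n1 m2 by simp
  have sym: "\<And>i j. adj i j = adj j i" unfolding adj_def using adj_sym[OF n1 m2] by blast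
  have irr: "\<And>i. \<not> adj i i" unfolding adj_def using adj_irr[OF n1 m2] by blast
  have Npos: "N > 0" unfolding N_def Dnm_size_def using n1 m2 by simp
  have Lc: "L \<in> carrier_mat N N" unfolding L_def by (rule lap_carrier)
  have conn: "x i = x j" if "Eq N adj x = 0" "i < N" "j < N" for x i j
  proof -
    have "(x i - x j)^2 \<le> real (m+1) * Eq N adj x"
      using pair_bound[OF n1 m2, of i j x] that unfolding N_def adj_def by simp
    then have "(x i - x j)^2 \<le> 0" using that by simp
    then show ?thesis by simp
  qed
  have ord: "order 0 p = 1" unfolding p_def L_def
    by (rule order_zero_simple[where adj=adj and N=N, OF sym irr Npos conn]) auto
  have pnz: "p \<noteq> 0"
    using degree_monic_char_poly[OF Lc] unfolding p_def by auto
  have poinc: "(\<Sum>i<N. (x i)^2) \<le> K / 2 * Eq N adj x" if "(\<Sum>i<N. x i) = 0" for x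
    using poincare[OF n1 m2, of x] that unfolding N_def adj_def K_def by (simp add: algebra_simps)
  have lowr: "c \<le> r" if "(\<Sum>i<N. x i) = 0" "S = (\<Sum>i<N. (x i)^2)" "S > 0" "r * S = Eq N adj x"
    "c = 2 / K" for x r S c
  proof -
    have "S \<le> K / 2 * (r * S)" using poinc[OF that(1)] that(2,4) by simp
    then have "2 * S \<le> (K * r) * S" by (simp add: algebra_simps)
    then have "2 \<le> K * r" using that(3) by (simp add: mult_le_cancel_right_pos)
    then show ?thesis unfolding that(5) using Kpos by (simp add: divide_le_eq mult.commute)
  qed
  have roots: "r \<ge> 0 \<and> (r \<noteq> 0 \<longrightarrow> 2 / K \<le> r)" if "poly p r = 0" for r
  proof -
    have "eigenvalue L r" using that eigenvalue_root_char_poly[OF Lc] unfolding p_def by simp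
    then obtain v where v: "v \<in> carrier_vec N" and vnz: "v \<noteq> 0\<^sub>v N" and ev: "L *\<^sub>v v = r \<cdot>\<^sub>v v"
      unfolding eigenvalue_def eigenvector_def using Lc by auto
    have e1: "r * (\<Sum>i<N. (v $ i)^2) = Eq N adj (\<lambda>k. v $ k)"
      using eig_props(1)[where adj=adj and N=N, OF sym irr v ev[unfolded L_def]] .
    have Spos: "(\<Sum>i<N. (v $ i)^2) > 0"
    proof -
      obtain i where i: "i < N" "v $ i \<noteq> 0"
        using vnz v by (metis eq_vecI carrier_vecD index_zero_vec)
      have "(v $ i)^2 \<le> (\<Sum>i<N. (v $ i)^2)" using i by (intro member_le_sum) auto
      moreover have "(v $ i)^2 > 0" using i by simp
      ultimately show ?thesis by linarith
    qed
    have "r \<ge> 0"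
    proof (rule ccontr)
      assume "\<not> r \<ge> 0"
      then have "r * (\<Sum>i<N. (v $ i)^2) < 0" using Spos by (simp add: mult_neg_pos)
      then show False using e1 Eq_nonneg[of N adj "\<lambda>k. v $ k"] by simp
    qed
    moreover have "2 / K \<le> r" if "r \<noteq> 0"
      using lowr[OF eig_props(2)[where adj=adj and N=N, OF sym irr v ev[unfolded L_def] that] refl Spos e1 refl] .
    ultimately show ?thesis by blast
  qed
  \<comment> \<open>the small eigenvalue from the test vector\<close>
  define y where "y = xt n m"
  define G where "G = (\<Sum>i<N. (y i)^2)"
  have G3: "3 * G = 6 * (real n - 1) * (real m - 1)^2 + real m * (real m - 1) * (real m + 1)"
    unfolding G_def y_def N_def by (rule xt_sq[OF n1 m2])
  have Gpos: "G > 0"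
  proof -
    have "real n - 1 \<ge> 0" "real m - 1 > 0" "real m > 0" using n1 m2 by auto
    then have "6 * (real n - 1) * (real m - 1)^2 \<ge> 0" "real m * (real m - 1) * (real m + 1) > 0"
      by auto
    then show ?thesis using G3 by linarith
  qed
  have ys: "(\<Sum>i<N. y i) = 0" unfolding y_def N_def by (rule xt_sum[OF n1 m2])
  have Ey: "Eq N adj y = 4 * (real m - 1)" unfolding y_def N_def adj_def by (rule xt_Eq[OF n1 m2])
  obtain \<mu> x where mroot: "poly p \<mu> = 0" and mG: "\<mu> * G \<le> Eq N adj y"
    and xs0: "(\<Sum>i<N. x i) = 0" and xs1: "(\<Sum>i<N. (x i)^2) = 1" and mx: "\<mu> = Eq N adj x"
    using min_eig[where adj=adj and N=N and y=y, OF sym irr ys Gpos[unfolded G_def]] unfolding p_def L_def G_def by blast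
  have mc: "2 / K \<le> \<mu>" using lowr[OF xs0 xs1[symmetric]] mx by simp
  have mpos: "\<mu> > 0" using mc Kpos by (smt (verit) divide_pos_pos)
  define xs where "xs = sorted_list_of_multiset (proots p)"
  have mxs: "mset xs = proots p" unfolding xs_def by simp
  have sxs: "sorted xs" unfolding xs_def by simp
  have setxs: "set xs = {r. poly p r = 0}" using pnz mxs by (metis set_mset_mset set_count_proots)
  have cnt0: "count (mset xs) 0 = 1" using mxs pnz ord by simp
  have in0: "0 \<in> set xs" using cnt0 by (metis count_inI one_neq_zero set_mset_mset)
  have inmu: "\<mu> \<in> set xs" using setxs mroot by simp
  have allnn: "r \<ge> 0" if "r \<in> set xs" for r using roots that setxs by auto
  obtain a b rest where xs_eq: "xs = a # b # rest"
  proof -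
    have "card {0, \<mu>} \<le> card (set xs)" using in0 inmu by (intro card_mono) auto
    also have "\<dots> \<le> length xs" by (rule card_length)
    finally have "2 \<le> length xs" using mpos by simp
    then show ?thesis using that by (cases xs; cases "tl xs") auto
  qed
  have a0: "a = 0"
  proof -
    obtain k where k: "k < length xs" "xs ! k = 0" using in0 by (metis in_set_conv_nth)
    have "xs ! 0 \<le> xs ! k" using sxs k by (intro sorted_nth_mono) auto
    moreover have "xs ! 0 \<ge> 0" using allnn xs_eq by simp
    ultimately show ?thesis using k xs_eq by simp
  qed
  have b0: "b \<noteq> 0"
  proof
    assume "b = 0"
    then have "count (mset xs) 0 \<ge> 2" using a0 xs_eq by simp
    then show False using cnt0 by simp
  qed
  have l2: "lambda2 L = b" unfolding lambda2_def xs_eq[unfolded xs_def p_def] by simp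
  have lower: "2 / K \<le> b"
  proof -
    have "b \<in> set xs" using xs_eq by simp
    then have "poly p b = 0" using setxs by simp
    then show ?thesis using roots b0 by blast
  qed
  have bmu: "b \<le> \<mu>"
  proof -
    obtain k where k: "k < length xs" "xs ! k = \<mu>" using inmu by (metis in_set_conv_nth)
    have "k \<noteq> 0" using k xs_eq a0 mpos by (cases k) auto
    then have "xs ! 1 \<le> xs ! k" using sxs k by (intro sorted_nth_mono) auto
    then show ?thesis using k xs_eq by simp
  qed
  define D where "D = 6 * real (m - 1) * real (n - 1) + real m * real (m - 1)"
  have Dpos: "D > 0"
  proof -
    have "real (m-1) > 0" "real m > 0" using m2 by auto
    then show ?thesis unfolding D_def by (intro add_nonneg_pos mult_nonneg_nonneg mult_pos_pos) auto
  qed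
  have mD: "\<mu> \<le> 12 / D"
  proof -
    have mG': "\<mu> * G \<le> 4 * (real m - 1)" using mG Ey by simp
    have DG: "(real m - 1) * D \<le> 3 * G"
    proof -
      have "(real m - 1) * D = 6 * (real n - 1) * (real m - 1)^2 + real m * (real m - 1) * (real m - 1)"
        unfolding D_def using n1 m2 by (simp add: of_nat_diff power2_eq_square algebra_simps)
      also have "\<dots> \<le> 6 * (real n - 1) * (real m - 1)^2 + real m * (real m - 1) * (real m + 1)"
        using m2 by (intro add_left_mono mult_left_mono) auto
      finally show ?thesis using G3 by simp
    qed
    have "\<mu> * ((real m - 1) * D) \<le> \<mu> * (3 * G)" using DG mpos by (intro mult_left_mono) auto
    also have "\<dots> \<le> 12 * (real m - 1)" using mG' by simp
    finally have "(real m - 1) * (\<mu> * D) \<le> (real m - 1) * 12" by (simp add: algebra_simps)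
    moreover have "real m - 1 > 0" using m2 by simp
    ultimately have "\<mu> * D \<le> 12" by (meson mult_le_cancel_left_pos)
    then show ?thesis using Dpos by (simp add: le_divide_eq)
  qed
  show ?thesis
    using lower bmu mD l2 unfolding K_def D_def L_def N_def adj_def by simp
qed

end
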